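(* Let $\nu$ be a continuous valuation on a topological space $X$ such that $\mathrm{Val}(\nu)=\{\nu(U):U\in\mathcal OX,\ \nu(U)\neq0,+\infty\}$ has a least element $r$. Then there is an irreducible closed subset $C$ of $X$ such that (1) $\nu'=\nu-r\,e_C$ is a continuous valuation, and (2) $\mathrm{Val}(\nu')\subseteq\{v-r:v\in\mathrm{Val}(\nu),\ v\neq r\}$.
   Context: A continuous valuation is a map $\nu:\mathcal OX\to[0,\infty]$ with $\nu(\emptyset)=0$, monotone, modular, preserving directed suprema of opens. A non-empty subset is irreducible if it is not contained in a union of two closed sets without being contained in one of them. For irreducible closed $C$, $e_C(U)=1$ if $U\cap C\neq\emptyset$ and $0$ otherwise. The difference $\nu-r\,e_C$ is pointwise, with $+\infty-r=+\infty$. *)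

theory Defs
  imports "HOL-Analysis.Analysis" "HOL-Library.Extended_Nonnegative_Real"
begin

text \<open>Valuations take values in [0,\<infinity>] = ennreal; they are functions on all sets,
  but only their values on open sets of the topology matter.\<close>

definition directed_open_family :: "'a topology \<Rightarrow> 'a set set \<Rightarrow> bool" where
  "directed_open_family T D \<longleftrightarrow>
     D \<noteq> {} \<and> (\<forall>U\<in>D. openin T U) \<and> (\<forall>U\<in>D. \<forall>V\<in>D. \<exists>W\<in>D. U \<union> V \<subseteq> W)"

definition continuous_valuation :: "'a topology \<Rightarrow> ('a set \<Rightarrow> ennreal) \<Rightarrow> bool" where
  "continuous_valuation T \<nu> \<longleftrightarrow>
     \<nu> {} = 0 \<and>
     (\<forall>U V. openin T U \<and> openin T V \<and> U \<subseteq> V \<longrightarrow> \<nu> U \<le> \<nu> V) \<and>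
     (\<forall>U V. openin T U \<and> openin T V \<longrightarrow> \<nu> U + \<nu> V = \<nu> (U \<union> V) + \<nu> (U \<inter> V)) \<and>
     (\<forall>D. directed_open_family T D \<longrightarrow> \<nu> (\<Union>D) = (SUP U\<in>D. \<nu> U))"

definition Val :: "'a topology \<Rightarrow> ('a set \<Rightarrow> ennreal) \<Rightarrow> ennreal set" where
  "Val T \<nu> = {\<nu> U | U. openin T U \<and> \<nu> U \<noteq> 0 \<and> \<nu> U \<noteq> \<infinity>}"

definition irreducible_set :: "'a topology \<Rightarrow> 'a set \<Rightarrow> bool" where
  "irreducible_set T C \<longleftrightarrow> C \<noteq> {} \<and> C \<subseteq> topspace T \<and>
     (\<forall>A B. closedin T A \<and> closedin T B \<and> C \<subseteq> A \<union> B \<longrightarrow> C \<subseteq> A \<or> C \<subseteq> B)"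

definition point_val :: "'a set \<Rightarrow> 'a set \<Rightarrow> ennreal" where
  "point_val C U = (if U \<inter> C \<noteq> {} then 1 else 0)"

text \<open>Pointwise difference; ennreal subtraction satisfies \<infinity> - r = \<infinity> for finite r.
  (It truncates at 0, so the statement separately asserts r e_C \<le> \<nu> on opens.)\<close>
definition val_diff :: "('a set \<Rightarrow> ennreal) \<Rightarrow> ennreal \<Rightarrow> 'a set \<Rightarrow> 'a set \<Rightarrow> ennreal" where
  "val_diff \<nu> r C U = \<nu> U - r * point_val C U"

end

theory Submission
  imports Defs
begin

lemma ennreal_canc:
  fixes a b r :: ennreal
  assumes "r \<noteq> top" "a + r = b + r" shows "a = b"
  by (metis assms ennreal_add_diff_cancel_right)

theorem lemma4p2:
  fixes T :: "'a topology" and \<nu> :: "'a set \<Rightarrow> ennreal" and r :: ennreal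
  assumes "continuous_valuation T \<nu>"
    and "r \<in> Val T \<nu>" and "\<forall>v\<in>Val T \<nu>. r \<le> v"
  shows "\<exists>C. closedin T C \<and> irreducible_set T C \<and>
           (\<forall>U. openin T U \<longrightarrow> r * point_val C U \<le> \<nu> U) \<and>
           continuous_valuation T (val_diff \<nu> r C) \<and>
           Val T (val_diff \<nu> r C) \<subseteq> {v - r | v. v \<in> Val T \<nu> \<and> v \<noteq> r}"
proof -
  have e0: "\<nu> {} = 0"
    and mono: "\<And>U V. openin T U \<Longrightarrow> openin T V \<Longrightarrow> U \<subseteq> V \<Longrightarrow> \<nu> U \<le> \<nu> V"
    and modu: "\<And>U V. openin T U \<Longrightarrow> openin T V \<Longrightarrow> \<nu> U + \<nu> V = \<nu> (U \<union> V) + \<nu> (U \<inter> V)"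
    and cont: "\<And>D. directed_open_family T D \<Longrightarrow> \<nu> (\<Union>D) = (SUP U\<in>D. \<nu> U)"
    using assms(1) unfolding continuous_valuation_def by auto
  obtain U0 where U0: "openin T U0" "\<nu> U0 = r" and r0: "r \<noteq> 0" and rtop: "r \<noteq> \<infinity>"
    using assms(2) unfolding Val_def by auto
  have rtop': "r \<noteq> top" using rtop by simp
  have rmin: "\<And>U. openin T U \<Longrightarrow> \<nu> U \<noteq> 0 \<Longrightarrow> \<nu> U \<noteq> \<infinity> \<Longrightarrow> r \<le> \<nu> U"
    using assms(3) unfolding Val_def by auto
  have two: "\<nu> (U \<inter> U0) = 0 \<or> \<nu> (U \<inter> U0) = r" if U: "openin T U" for U
  proof -
    have o: "openin T (U \<inter> U0)" using U U0 by auto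
    have le: "\<nu> (U \<inter> U0) \<le> r" using mono[OF o U0(1)] U0 by auto
    hence "\<nu> (U \<inter> U0) \<noteq> \<infinity>" using rtop by (auto simp: top_unique)
    thus ?thesis using rmin[OF o] le by (auto intro: antisym)
  qed
  define F where "F = {U. openin T U \<and> \<nu> (U \<inter> U0) = 0}"
  define W where "W = \<Union>F"
  have Wopen: "openin T W" unfolding W_def F_def by auto
  have Fun: "U \<union> V \<in> F" if "U \<in> F" "V \<in> F" for U V
  proof -
    have o: "openin T (U \<inter> U0)" "openin T (V \<inter> U0)" and z: "\<nu> (U \<inter> U0) = 0" "\<nu> (V \<inter> U0) = 0"
      and oo: "openin T U" "openin T V" using U0 that by (auto simp: F_def)
    have "\<nu> ((U \<inter> U0) \<union> (V \<inter> U0)) + \<nu> ((U \<inter> U0) \<inter> (V \<inter> U0)) = 0" using modu[OF o] z by simp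
    moreover have "(U \<inter> U0) \<union> (V \<inter> U0) = (U \<union> V) \<inter> U0" by auto
    ultimately show "U \<union> V \<in> F" using oo by (auto simp: F_def)
  qed
  have F0: "{} \<in> F" using e0 by (simp add: F_def)
  have dirF: "directed_open_family T ((\<lambda>U. U \<inter> U0) ` F)"
    unfolding directed_open_family_def
  proof (intro conjI ballI)
    show "(\<lambda>U. U \<inter> U0) ` F \<noteq> {}" using F0 by blast
  next
    fix X assume "X \<in> (\<lambda>U. U \<inter> U0) ` F" then show "openin T X" using U0(1) by (auto simp: F_def)
  next
    fix X Y assume "X \<in> (\<lambda>U. U \<inter> U0) ` F" "Y \<in> (\<lambda>U. U \<inter> U0) ` F"
    then obtain U V where "U \<in> F" "V \<in> F" "X = U \<inter> U0" "Y = V \<inter> U0" by auto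
    then show "\<exists>Z\<in>(\<lambda>U. U \<inter> U0) ` F. X \<union> Y \<subseteq> Z"
      using Fun[of U V] by (intro bexI[of _ "(U \<union> V) \<inter> U0"]) auto
  qed
  have WU0: "\<nu> (W \<inter> U0) = 0"
  proof -
    have "W \<inter> U0 = \<Union>((\<lambda>U. U \<inter> U0) ` F)" unfolding W_def by auto
    hence "\<nu> (W \<inter> U0) = (SUP X\<in>(\<lambda>U. U \<inter> U0) ` F. \<nu> X)" using cont[OF dirF] by simp
    also have "\<dots> = 0" by (auto intro!: antisym SUP_least simp: F_def)
    finally show ?thesis .
  qed
  have inW: "U \<subseteq> W \<longleftrightarrow> \<nu> (U \<inter> U0) = 0" if U: "openin T U" for U
  proof
    assume "U \<subseteq> W"
    hence "\<nu> (U \<inter> U0) \<le> \<nu> (W \<inter> U0)" using U U0(1) Wopen by (intro mono) auto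
    thus "\<nu> (U \<inter> U0) = 0" using WU0 by simp
  next
    assume "\<nu> (U \<inter> U0) = 0" thus "U \<subseteq> W" using U by (auto simp: W_def F_def)
  qed
  define C where "C = topspace T - W"
  have Cclosed: "closedin T C" unfolding C_def using Wopen by blast
  define m where "m U \<longleftrightarrow> \<nu> (U \<inter> U0) = r" for U
  have meet: "U \<inter> C \<noteq> {} \<longleftrightarrow> m U" if U: "openin T U" for U
  proof -
    have "U \<inter> C \<noteq> {} \<longleftrightarrow> \<not> U \<subseteq> W" using openin_subset[OF U] unfolding C_def by auto
    also have "\<dots> \<longleftrightarrow> m U" using inW[OF U] two[OF U] r0 unfolding m_def by auto
    finally show ?thesis .
  qed
  have notm: "\<not> m U \<longleftrightarrow> \<nu> (U \<inter> U0) = 0" if U: "openin T U" for U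
    using two[OF U] r0 unfolding m_def by auto
  have pv: "r * point_val C U = (if m U then r else 0)" if U: "openin T U" for U
    using meet[OF U] unfolding point_val_def by auto
  have inter: "m (U \<inter> V)" if U: "openin T U" and V: "openin T V" and mU: "m U" and mV: "m V" for U V
  proof (rule ccontr)
    assume "\<not> m (U \<inter> V)"
    hence z: "\<nu> (U \<inter> V \<inter> U0) = 0" using notm[of "U \<inter> V"] U V by auto
    have o: "openin T (U \<inter> U0)" "openin T (V \<inter> U0)" using U V U0 by auto
    have "r + r = \<nu> ((U \<inter> U0) \<union> (V \<inter> U0)) + \<nu> ((U \<inter> U0) \<inter> (V \<inter> U0))"
      using modu[OF o] mU mV unfolding m_def by simp
    moreover have "(U \<inter> U0) \<inter> (V \<inter> U0) = U \<inter> V \<inter> U0" by auto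
    moreover have "(U \<inter> U0) \<union> (V \<inter> U0) = (U \<union> V) \<inter> U0" by auto
    ultimately have "r + r = \<nu> ((U \<union> V) \<inter> U0)" using z by simp
    moreover have "\<nu> ((U \<union> V) \<inter> U0) = 0 \<or> \<nu> ((U \<union> V) \<inter> U0) = r" using two U V by auto
    ultimately have "r + r = 0 + r \<or> r + r = r" by auto
    hence "r = 0" using ennreal_canc[OF rtop', of r 0] by auto
    thus False using r0 by simp
  qed
  have union: "m (U \<union> V) \<longleftrightarrow> m U \<or> m V" if U: "openin T U" and V: "openin T V" for U V
  proof -
    have "U \<union> V \<subseteq> W \<longleftrightarrow> U \<subseteq> W \<and> V \<subseteq> W" by auto
    thus ?thesis using inW[OF U] inW[OF V] inW[of "U \<union> V"] notm[OF U] notm[OF V] notm[of "U \<union> V"] U V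
      by auto
  qed
  have inter2: "m (U \<inter> V) \<longleftrightarrow> m U \<and> m V" if U: "openin T U" and V: "openin T V" for U V
  proof -
    have "m (U \<inter> V) \<Longrightarrow> m U"
      using inW[OF U] inW[of "U \<inter> V"] notm[OF U] notm[of "U \<inter> V"] U V by auto
    moreover have "m (U \<inter> V) \<Longrightarrow> m V"
      using inW[OF V] inW[of "U \<inter> V"] notm[OF V] notm[of "U \<inter> V"] U V by auto
    ultimately show ?thesis using inter[OF U V] by auto
  qed
  have key: "\<nu> (U \<union> (V \<inter> U0)) = \<nu> U + r"
    if U: "openin T U" and V: "openin T V" and mU: "\<not> m U" and mV: "m V" for U V
  proof -
    have o: "openin T (V \<inter> U0)" using V U0 by auto
    have "\<nu> U + r = \<nu> (U \<union> (V \<inter> U0)) + \<nu> (U \<inter> (V \<inter> U0))"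
      using modu[OF U o] mV unfolding m_def by simp
    moreover have "\<nu> (U \<inter> (V \<inter> U0)) \<le> \<nu> (U \<inter> U0)" using U V U0 by (intro mono) auto
    moreover have "\<nu> (U \<inter> U0) = 0" using notm[OF U] mU by simp
    ultimately show ?thesis by simp
  qed
  have ge: "r \<le> \<nu> U" if U: "openin T U" and mU: "m U" for U
  proof -
    have "\<nu> (U \<inter> U0) \<le> \<nu> U" using U U0 by (intro mono) auto
    thus ?thesis using mU unfolding m_def by simp
  qed
  define g where "g = val_diff \<nu> r C"
  have gdef: "g U = (if m U then \<nu> U - r else \<nu> U)" if U: "openin T U" for U
    using pv[OF U] unfolding g_def val_diff_def by auto
  have gadd: "\<nu> U = g U + r" if U: "openin T U" and mU: "m U" for U
    using gdef[OF U] mU diff_add_cancel_ennreal[OF ge[OF U mU]] by simp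
  have gnot: "g U = \<nu> U" if U: "openin T U" and mU: "\<not> m U" for U
    using gdef[OF U] mU by simp
  have gmono: "g U \<le> g V" if U: "openin T U" and V: "openin T V" and UV: "U \<subseteq> V" for U V
  proof (cases "m U")
    case True
    hence "m V" using union[OF U V] UV by (metis sup.absorb2)
    thus ?thesis using True gdef[OF U] gdef[OF V] mono[OF U V UV] by (auto intro: ennreal_minus_mono)
  next
    case False
    show ?thesis
    proof (cases "m V")
      case True
      have o: "openin T (U \<union> (V \<inter> U0))" using U V U0 by auto
      have "\<nu> U + r \<le> \<nu> V" using key[OF U V False True] mono[OF o V] UV by auto
      hence "\<nu> U + r \<le> g V + r" using gadd[OF V True] by simp
      hence "(\<nu> U + r) - r \<le> (g V + r) - r" by (rule ennreal_minus_mono) simp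
      thus ?thesis using gnot[OF U False] rtop' by simp
    next
      case False2: False
      thus ?thesis using gnot[OF U False] gnot[OF V False2] mono[OF U V UV] by simp
    qed
  qed
  have irr: "irreducible_set T C"
    unfolding irreducible_set_def
  proof (intro conjI allI impI)
    have "m U0" using U0 unfolding m_def by simp
    thus "C \<noteq> {}" using meet[OF U0(1)] by auto
    show "C \<subseteq> topspace T" unfolding C_def by auto
  next
    fix A B assume AB: "closedin T A \<and> closedin T B \<and> C \<subseteq> A \<union> B"
    show "C \<subseteq> A \<or> C \<subseteq> B"
    proof (rule ccontr)
      assume nn: "\<not> (C \<subseteq> A \<or> C \<subseteq> B)"
      have oA: "openin T (topspace T - A)" and oB: "openin T (topspace T - B)" using AB by auto
      have "(topspace T - A) \<inter> C \<noteq> {}" "(topspace T - B) \<inter> C \<noteq> {}" using nn unfolding C_def by auto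
      hence "m (topspace T - A)" "m (topspace T - B)" using meet oA oB by auto
      hence "m ((topspace T - A) \<inter> (topspace T - B))" using inter oA oB by auto
      hence "((topspace T - A) \<inter> (topspace T - B)) \<inter> C \<noteq> {}" using meet oA oB by blast
      thus False using AB by auto
    qed
  qed
  have bound: "\<forall>U. openin T U \<longrightarrow> r * point_val C U \<le> \<nu> U"
    using pv ge by simp
  have cv: "continuous_valuation T g"
    unfolding continuous_valuation_def
  proof (intro conjI allI impI)
    show "g {} = 0" unfolding g_def val_diff_def using e0 by simp
  next
    fix U V assume "openin T U \<and> openin T V \<and> U \<subseteq> V"
    thus "g U \<le> g V" using gmono by blast
  next
    fix U V assume UV: "openin T U \<and> openin T V"
    hence U: "openin T U" and V: "openin T V" by auto
    have oUV: "openin T (U \<union> V)" "openin T (U \<inter> V)" using U V by auto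
    have M: "\<nu> U + \<nu> V = \<nu> (U \<union> V) + \<nu> (U \<inter> V)" by (rule modu[OF U V])
    consider "m U" "m V" | "m U" "\<not> m V" | "\<not> m U" "m V" | "\<not> m U" "\<not> m V" by blast
    thus "g U + g V = g (U \<union> V) + g (U \<inter> V)"
    proof cases
      case 1
      hence "m (U \<union> V)" "m (U \<inter> V)" using union[OF U V] inter2[OF U V] by auto
      hence "(g U + g V) + r + r = (g (U \<union> V) + g (U \<inter> V)) + r + r"
        using M gadd[OF U] gadd[OF V] gadd[OF oUV(1)] gadd[OF oUV(2)] 1 by (simp add: algebra_simps)
      thus ?thesis using ennreal_canc[OF rtop'] by metis
    next
      case 2
      hence "m (U \<union> V)" "\<not> m (U \<inter> V)" using union[OF U V] inter2[OF U V] by auto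
      hence "(g U + g V) + r = (g (U \<union> V) + g (U \<inter> V)) + r"
        using M gadd[OF U] gnot[OF V] gadd[OF oUV(1)] gnot[OF oUV(2)] 2 by (simp add: algebra_simps)
      thus ?thesis using ennreal_canc[OF rtop'] by metis
    next
      case 3
      hence "m (U \<union> V)" "\<not> m (U \<inter> V)" using union[OF U V] inter2[OF U V] by auto
      hence "(g U + g V) + r = (g (U \<union> V) + g (U \<inter> V)) + r"
        using M gnot[OF U] gadd[OF V] gadd[OF oUV(1)] gnot[OF oUV(2)] 3 by (simp add: algebra_simps)
      thus ?thesis using ennreal_canc[OF rtop'] by metis
    next
      case 4
      hence "\<not> m (U \<union> V)" "\<not> m (U \<inter> V)" using union[OF U V] inter2[OF U V] by auto
      thus ?thesis using M gnot[OF U] gnot[OF V] gnot[OF oUV(1)] gnot[OF oUV(2)] 4 by simp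
    qed
  next
    fix D assume D: "directed_open_family T D"
    hence Dne: "D \<noteq> {}" and Do: "\<And>U. U \<in> D \<Longrightarrow> openin T U"
      and Dd: "\<And>U V. U \<in> D \<Longrightarrow> V \<in> D \<Longrightarrow> \<exists>Z\<in>D. U \<union> V \<subseteq> Z"
      unfolding directed_open_family_def by auto
    have oD: "openin T (\<Union>D)" using Do by auto
    have Nu: "\<nu> (\<Union>D) = (SUP U\<in>D. \<nu> U)" by (rule cont[OF D])
    show "g (\<Union>D) = (SUP U\<in>D. g U)"
    proof (cases "m (\<Union>D)")
      case False
      have "\<not> m U" if "U \<in> D" for U
        using False union[OF Do[OF that] oD] that by (metis Union_upper sup.absorb2)
      hence "(SUP U\<in>D. g U) = (SUP U\<in>D. \<nu> U)" using gnot Do by (intro SUP_cong) auto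
      thus ?thesis using gnot[OF oD False] Nu by simp
    next
      case True
      obtain U1 where U1: "U1 \<in> D" "m U1"
      proof (rule ccontr)
        assume "\<not> thesis"
        hence "\<And>U. U \<in> D \<Longrightarrow> U \<subseteq> W" using that inW Do notm by blast
        hence "\<Union>D \<subseteq> W" by auto
        thus False using True inW[OF oD] notm[OF oD] by auto
      qed
      define D' where "D' = {U \<in> D. m U}"
      have D'ne: "D' \<noteq> {}" using U1 unfolding D'_def by auto
      have cof: "\<exists>V\<in>D'. U \<subseteq> V" if UD: "U \<in> D" for U
      proof -
        obtain V where V: "V \<in> D" "U \<union> U1 \<subseteq> V" using Dd[OF UD U1(1)] by auto
        have "m V" using union[OF Do[OF U1(1)] Do[OF V(1)]] V U1 by (metis le_sup_iff sup.absorb2)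
        thus ?thesis using V unfolding D'_def by auto
      qed
      have S1: "(SUP U\<in>D. g U) = (SUP U\<in>D'. g U)"
      proof (rule antisym)
        show "(SUP U\<in>D. g U) \<le> (SUP U\<in>D'. g U)"
        proof (rule SUP_least)
          fix U assume U: "U \<in> D"
          then obtain V where V: "V \<in> D'" "U \<subseteq> V" using cof by blast
          have "g U \<le> g V" using gmono Do U V unfolding D'_def by auto
          also have "\<dots> \<le> (SUP U\<in>D'. g U)" using V(1) by (rule SUP_upper)
          finally show "g U \<le> (SUP U\<in>D'. g U)" .
        qed
        show "(SUP U\<in>D'. g U) \<le> (SUP U\<in>D. g U)" unfolding D'_def by (rule SUP_subset_mono) auto
      qed
      have S2: "(SUP U\<in>D. \<nu> U) = (SUP U\<in>D'. \<nu> U)"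
      proof (rule antisym)
        show "(SUP U\<in>D. \<nu> U) \<le> (SUP U\<in>D'. \<nu> U)"
        proof (rule SUP_least)
          fix U assume U: "U \<in> D"
          then obtain V where V: "V \<in> D'" "U \<subseteq> V" using cof by blast
          have "\<nu> U \<le> \<nu> V" using mono Do U V unfolding D'_def by auto
          also have "\<dots> \<le> (SUP U\<in>D'. \<nu> U)" using V(1) by (rule SUP_upper)
          finally show "\<nu> U \<le> (SUP U\<in>D'. \<nu> U)" .
        qed
        show "(SUP U\<in>D'. \<nu> U) \<le> (SUP U\<in>D. \<nu> U)" unfolding D'_def by (rule SUP_subset_mono) auto
      qed
      have "g (\<Union>D) + r = \<nu> (\<Union>D)" using gadd[OF oD True] by simp
      also have "\<dots> = (SUP U\<in>D'. \<nu> U)" using Nu S2 by simp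
      also have "\<dots> = (SUP U\<in>D'. g U + r)" using gadd Do unfolding D'_def by (intro SUP_cong) auto
      also have "\<dots> = (SUP U\<in>D'. g U) + r" by (rule ennreal_SUP_add_left[OF D'ne])
      also have "\<dots> = (SUP U\<in>D. g U) + r" using S1 by simp
      finally show ?thesis using ennreal_canc[OF rtop'] by metis
    qed
  qed
  have vals: "Val T g \<subseteq> {v - r | v. v \<in> Val T \<nu> \<and> v \<noteq> r}"
  proof
    fix x assume "x \<in> Val T g"
    then obtain U where U: "openin T U" and x: "x = g U" "g U \<noteq> 0" "g U \<noteq> \<infinity>"
      unfolding Val_def by auto
    show "x \<in> {v - r | v. v \<in> Val T \<nu> \<and> v \<noteq> r}"
    proof (cases "m U")
      case True
      have e: "\<nu> U = g U + r" by (rule gadd[OF U True])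
      have "\<nu> U \<in> Val T \<nu>" unfolding Val_def using U e x r0 rtop by (intro CollectI exI[of _ U]) (auto simp: ennreal_add_eq_top)
      moreover have "\<nu> U \<noteq> r" using e x(2) ennreal_canc[OF rtop', of "g U" 0] by auto
      moreover have "x = \<nu> U - r" using e x rtop' by simp
      ultimately show ?thesis by blast
    next
      case False
      have mU0: "m U0" using U0 unfolding m_def by simp
      have e: "\<nu> (U \<union> U0) = g U + r" using key[OF U U0(1) False mU0] gnot[OF U False] by simp
      have o: "openin T (U \<union> U0)" using U U0 by auto
      have "\<nu> (U \<union> U0) \<in> Val T \<nu>" unfolding Val_def using o e x r0 rtop by (intro CollectI exI[of _ "U \<union> U0"]) (auto simp: ennreal_add_eq_top)
      moreover have "\<nu> (U \<union> U0) \<noteq> r" using e x(2) ennreal_canc[OF rtop', of "g U" 0] by auto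
      moreover have "x = \<nu> (U \<union> U0) - r" using e x rtop' by simp
      ultimately show ?thesis by blast
    qed
  qed
  show ?thesis
    using Cclosed irr bound cv vals unfolding g_def by blast
qed

end
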